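(* Let $q$ be a prime. For any positive integer $N\leqslant q^{1/2}$ we have $$E_q(N)\leqslant N^6q^{-1+o(1)}+N^2q^{o(1)},$$ where $o(1)\to0$ as $q\to\infty$.
   Context: $a\sim A$ means $A\leqslant a<2A$. $E_q(N)=\#\{(u,v,x,y)\in\mathbb{F}_q^4:\ u^2,v^2,x^2,y^2\sim N,\ u+v=x+y\}$, where $u^2,v^2,x^2,y^2$ are computed modulo $q$ and represented by their residues in $\{0,\dots,q-1\}$. *)

theory Defs
  imports Complex_Main "HOL-Computational_Algebra.Primes"
begin

text \<open>a \<sim> A means A \<le> a < 2A. Elements of F_q are represented by residues {0..q-1};
  squares are reduced mod q.\<close>
definition sim :: "nat \<Rightarrow> nat \<Rightarrow> bool" where
  "sim a A \<longleftrightarrow> A \<le> a \<and> a < 2 * A"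

definition Eq :: "nat \<Rightarrow> nat \<Rightarrow> nat" where
  "Eq q N = card {(u, v, x, y). u < q \<and> v < q \<and> x < q \<and> y < q \<and>
      sim (u^2 mod q) N \<and> sim (v^2 mod q) N \<and> sim (x^2 mod q) N \<and> sim (y^2 mod q) N \<and>
      (u + v) mod q = (x + y) mod q}"

end

theory Submission
  imports Defs "HOL-Number_Theory.Cong"
begin

definition Fp :: "int \<Rightarrow> int \<Rightarrow> int \<Rightarrow> int \<Rightarrow> int" where
  "Fp a b c d = ((c-d)^2 - (a-b)^2)^2 - 4*(c+d-a-b)*(a+b)*((c-d)^2-(a-b)^2) + 4*(c+d-a-b)^2*(a-b)^2"

definition E1 :: "int \<Rightarrow> int \<Rightarrow> int \<Rightarrow> int" where
  "E1 s a b = s^4 - 2*s^2*(a+b) + (a-b)^2"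

lemma E1_zero: "E1 (u+v) (u^2) (v^2) = 0"
  unfolding E1_def by algebra

lemma E1_cong: "[s = s'] (mod q) \<Longrightarrow> [a = a'] (mod q) \<Longrightarrow> [b = b'] (mod q) \<Longrightarrow> [E1 s a b = E1 s' a' b'] (mod q)"
  unfolding E1_def by (intro cong_add cong_diff cong_mult cong_pow cong_refl) auto

lemma Fp_identity: "Fp a b c d = 4*(c+d-a-b)^2 * E1 s a b + (E1 s a b - E1 s c d) * ((E1 s a b - E1 s c d) - 4*s^2*(c+d-a-b) + 4*(c+d-a-b)*(a+b))"
  unfolding Fp_def E1_def by algebra

lemma Fp_dvd:
  fixes u v x y q :: nat
  assumes "(u + v) mod q = (x + y) mod q"
  shows "int q dvd Fp (int (u^2 mod q)) (int (v^2 mod q)) (int (x^2 mod q)) (int (y^2 mod q))"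
proof -
  let ?s = "int u + int v"
  let ?a = "int (u^2 mod q)" let ?b = "int (v^2 mod q)" let ?c = "int (x^2 mod q)" let ?d = "int (y^2 mod q)"
  have ca: "[?a = (int u)^2] (mod int q)" by (simp add: cong_def zmod_int)
  have cb: "[?b = (int v)^2] (mod int q)" by (simp add: cong_def zmod_int)
  have cc: "[?c = (int x)^2] (mod int q)" by (simp add: cong_def zmod_int)
  have cd: "[?d = (int y)^2] (mod int q)" by (simp add: cong_def zmod_int)
  have ss: "[?s = int x + int y] (mod int q)" using assms cong_int_iff[of "u+v" "x+y" q] by (simp add: cong_def)
  have "[E1 ?s ?a ?b = E1 ?s ((int u)^2) ((int v)^2)] (mod int q)" by (intro E1_cong ca cb cong_refl)
  then have h1: "int q dvd E1 ?s ?a ?b" using E1_zero[of "int u" "int v"] by (simp add: cong_0_iff)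
  have "[E1 ?s ?c ?d = E1 (int x + int y) ((int x)^2) ((int y)^2)] (mod int q)" by (intro E1_cong ss cc cd)
  then have h2: "int q dvd E1 ?s ?c ?d" using E1_zero[of "int x" "int y"] by (simp add: cong_0_iff)
  show ?thesis unfolding Fp_identity[of _ _ _ _ ?s] using h1 h2 by (intro dvd_add dvd_mult dvd_mult2 dvd_diff) auto
qed

definition dcount :: "nat \<Rightarrow> nat" where "dcount n = card {d. d dvd n}"

lemma dcount_mult:
  assumes "a > 0" "b > 0"
  shows "dcount (a*b) \<le> dcount a * dcount b"
proof -
  have sub: "{d. d dvd a*b} \<subseteq> (\<lambda>(x,y). x*y) ` ({d. d dvd a} \<times> {d. d dvd b})"
  proof
    fix d assume "d \<in> {d. d dvd a*b}"
    then obtain x y where "d = x*y" "x dvd a" "y dvd b" by (auto elim: dvd_productE)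
    then show "d \<in> (\<lambda>(x,y). x*y) ` ({d. d dvd a} \<times> {d. d dvd b})" by auto
  qed
  have fin: "finite ({d. d dvd a} \<times> {d. d dvd b})" using assms by simp
  have "card {d. d dvd a*b} \<le> card ((\<lambda>(x,y). x*y) ` ({d. d dvd a} \<times> {d. d dvd b}))"
    using sub fin by (intro card_mono) auto
  also have "\<dots> \<le> card ({d. d dvd a} \<times> {d. d dvd b})" using fin by (rule card_image_le)
  finally show ?thesis unfolding dcount_def by (simp add: card_cartesian_product)
qed

lemma dcount_primepow:
  assumes "prime (p::nat)" shows "dcount (p^e) \<le> e + 1"
proof -
  have "{d. d dvd p^e} = (\<lambda>i. p^i) ` {..e}"
    unfolding set_eq_iff image_iff mem_Collect_eq atMost_iff using divides_primepow_nat[OF assms] by (simp add: Bex_def)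
  then have "card {d. d dvd p^e} \<le> card {..e}" by (simp only:) (rule card_image_le, simp)
  then show ?thesis unfolding dcount_def by simp
qed

lemma exK: fixes \<delta> :: real assumes "\<delta> > 0" shows "\<exists>K\<ge>1. \<forall>e::nat. real e + 1 \<le> K * 2 powr (\<delta> * e)"
proof -
  define K where "K = max 1 (1 / (\<delta> * ln 2))"
  have K1: "K \<ge> 1" unfolding K_def by simp
  have dl: "\<delta> * ln 2 > 0" using assms by simp
  have "K \<ge> 1 / (\<delta> * ln 2)" unfolding K_def by simp
  then have "K * (\<delta> * ln 2) \<ge> 1 / (\<delta> * ln 2) * (\<delta> * ln 2)"
    using dl by (intro mult_right_mono) auto
  moreover have "1 / (\<delta> * ln 2) * (\<delta> * ln 2) = 1" using dl assms by (simp add: field_simps)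
  ultimately have K2: "K * (\<delta> * ln 2) \<ge> 1" by simp
  show ?thesis
  proof (intro exI conjI allI)
    show "K \<ge> 1" by (rule K1)
    fix e :: nat
    have "2 powr (\<delta> * e) = exp (\<delta> * e * ln 2)" by (simp add: powr_def)
    also have "\<dots> \<ge> 1 + \<delta> * e * ln 2" by (rule exp_ge_add_one_self)
    finally have h: "2 powr (\<delta> * e) \<ge> 1 + \<delta> * e * ln 2" .
    have "real e + 1 \<le> K + K * (\<delta> * ln 2) * e"
    proof -
      have "real e \<le> K * (\<delta> * ln 2) * e" using K2 by (simp add: mult_right_mono[of 1 _ "real e", simplified])
      then show ?thesis using K1 by linarith
    qed
    also have "\<dots> = K * (1 + \<delta> * e * ln 2)" by (simp add: algebra_simps)
    also have "\<dots> \<le> K * 2 powr (\<delta> * e)" using h K1 by simp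
    finally show "real e + 1 \<le> K * 2 powr (\<delta> * e)" .
  qed
qed

lemma divisor_bound:
  fixes \<delta> :: real assumes dpos: "\<delta> > 0"
  shows "\<exists>C>0. \<forall>n>0. real (dcount n) \<le> C * real n powr \<delta>"
proof -
  obtain K where K1: "K \<ge> 1" and hK: "\<And>e::nat. real e + 1 \<le> K * 2 powr (\<delta> * e)"
    using exK[OF dpos] by blast
  define P0 :: nat where "P0 = nat \<lceil>2 powr (1/\<delta>)\<rceil>"
  have bigp: "2 \<le> real p powr \<delta>" if "p \<ge> P0" for p :: nat
  proof -
    have "real p \<ge> 2 powr (1/\<delta>)" using that unfolding P0_def by linarith
    then have "real p powr \<delta> \<ge> (2 powr (1/\<delta>)) powr \<delta>"
      using dpos by (intro powr_mono2) auto
    also have "(2 powr (1/\<delta>)) powr \<delta> = 2" using dpos by (simp add: powr_powr)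
    finally show ?thesis by simp
  qed
  define c where "c n = card {p. prime p \<and> p dvd n \<and> p < P0}" for n :: nat
  have main: "real (dcount n) \<le> K ^ c n * real n powr \<delta>" if "n > 0" for n
    using that
  proof (induction n rule: less_induct)
    case (less n)
    show ?case
    proof (cases "n = 1")
      case True
      have "{d. d dvd (1::nat)} = {1}" by auto
      then have "dcount n = 1" using True unfolding dcount_def by simp
      moreover have "c n = 0" using True unfolding c_def by simp
      ultimately show ?thesis using True by simp
    next
      case False
      then obtain p where p: "prime p" "p dvd n" using prime_factor_nat by blast
      define e where "e = multiplicity p n"
      obtain m where nm: "n = p ^ e * m" and pm: "\<not> p dvd m"
        unfolding e_def using less.prems p(1) by (metis multiplicity_decompose' not_prime_unit neq0_conv)
      have e1: "e \<ge> 1" unfolding e_def using p less.prems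
        by (simp add: prime_multiplicity_gt_zero_iff Suc_le_eq)
      have m0: "m > 0" using nm less.prems by (cases "m = 0") auto
      have p2: "p \<ge> 2" using p(1) by (simp add: prime_ge_2_nat)
      have "p ^ 1 \<le> p ^ e" using p2 e1 by (intro power_increasing) auto
      then have "p ^ e \<ge> 2" using p2 by simp
      then have "1 * m < p ^ e * m" using m0 by (intro mult_strict_right_mono) auto
      then have mn: "m < n" using nm by simp
      have IH: "real (dcount m) \<le> K ^ c m * real m powr \<delta>" using less.IH[OF mn m0] .
      have dn: "real (dcount n) \<le> (real e + 1) * real (dcount m)"
      proof -
        have "dcount n \<le> dcount (p^e) * dcount m" unfolding nm
          using p2 m0 by (intro dcount_mult) auto
        also have "\<dots> \<le> (e + 1) * dcount m" using dcount_primepow[OF p(1), of e] by (intro mult_right_mono) auto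
        finally have "real (dcount n) \<le> real ((e + 1) * dcount m)" by (simp only: of_nat_le_iff)
        then show ?thesis by (simp add: algebra_simps)
      qed
      have npow: "real n powr \<delta> = real p powr (\<delta> * e) * real m powr \<delta>"
      proof -
        have "real n = real p powr (real e) * real m" using nm p2 by (simp add: powr_realpow)
        then have "real n powr \<delta> = (real p powr (real e)) powr \<delta> * real m powr \<delta>"
          by (simp add: powr_mult)
        also have "\<dots> = real p powr (\<delta> * e) * real m powr \<delta>" by (simp add: powr_powr mult.commute)
        finally show ?thesis .
      qed
      have primes_n: "{r. prime r \<and> r dvd n \<and> r < P0} = (if p < P0 then insert p else id) {r. prime r \<and> r dvd m \<and> r < P0}"
      proof -
        have "r dvd n \<longleftrightarrow> r = p \<or> r dvd m" if r: "prime r" for r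
        proof -
          have "r dvd n \<longleftrightarrow> r dvd p ^ e \<or> r dvd m" unfolding nm using r by (rule prime_dvd_mult_iff)
          also have "r dvd p ^ e \<longleftrightarrow> r dvd p" using r e1 by (intro prime_dvd_power_iff) auto
          also have "r dvd p \<longleftrightarrow> r = p" using primes_dvd_imp_eq[OF r p(1)] by auto
          finally show ?thesis .
        qed
        then show ?thesis using p by (auto simp: set_eq_iff)
      qed
      have fin: "finite {r. prime r \<and> r dvd m \<and> r < P0}" by (rule finite_subset[of _ "{..<P0}"]) auto
      have pnot: "p \<notin> {r. prime r \<and> r dvd m \<and> r < P0}" using pm by simp
      have Kpos: "K ^ c m \<ge> 0" using K1 by simp
      have mpos: "real m powr \<delta> \<ge> 0" by simp
      show ?thesis
      proof (cases "p < P0")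
        case True
        then have cn: "c n = Suc (c m)" unfolding c_def primes_n using fin pnot by simp
        have "real e + 1 \<le> K * 2 powr (\<delta> * e)" by (rule hK)
        also have "\<dots> \<le> K * real p powr (\<delta> * e)"
          using K1 p2 dpos by (intro mult_left_mono powr_mono2) auto
        finally have ee: "real e + 1 \<le> K * real p powr (\<delta> * e)" .
        have hh: "(real e + 1) * real (dcount m) \<le> (real e + 1) * (K ^ c m * real m powr \<delta>)"
          by (rule mult_left_mono[OF IH]) simp
        have "real (dcount n) \<le> (real e + 1) * (K ^ c m * real m powr \<delta>)"
          using dn hh by (rule order_trans)
        also have "\<dots> \<le> (K * real p powr (\<delta> * e)) * (K ^ c m * real m powr \<delta>)"
          using ee Kpos mpos by (intro mult_right_mono) auto
        also have "\<dots> = K ^ c n * real n powr \<delta>" unfolding cn npow by simp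
        finally show ?thesis .
      next
        case False
        then have cn: "c n = c m" unfolding c_def primes_n by simp
        have "real e + 1 \<le> 2 ^ e"
        proof -
          have "e < 2 ^ e" by simp
          then have "e + 1 \<le> (2::nat) ^ e" by (simp only: Suc_le_eq[symmetric] Suc_eq_plus1)
          then have "real (e + 1) \<le> real ((2::nat) ^ e)" by (simp only: of_nat_le_iff)
          then show ?thesis by simp
        qed
        also have "(2::real) ^ e \<le> (real p powr \<delta>) ^ e"
          using bigp[of p] False by (intro power_mono) auto
        also have "\<dots> = real p powr (\<delta> * e)" using p2 by (simp add: powr_powr[symmetric] powr_realpow)
        finally have ee: "real e + 1 \<le> real p powr (\<delta> * e)" .
        have hh: "(real e + 1) * real (dcount m) \<le> (real e + 1) * (K ^ c m * real m powr \<delta>)"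
          by (rule mult_left_mono[OF IH]) simp
        have "real (dcount n) \<le> (real e + 1) * (K ^ c m * real m powr \<delta>)"
          using dn hh by (rule order_trans)
        also have "\<dots> \<le> (real p powr (\<delta> * e)) * (K ^ c m * real m powr \<delta>)"
          using ee Kpos mpos by (intro mult_right_mono) auto
        also have "\<dots> = K ^ c n * real n powr \<delta>" unfolding cn npow by simp
        finally show ?thesis .
      qed
    qed
  qed
  show ?thesis
  proof (intro exI conjI allI impI)
    show "K ^ P0 > 0" using K1 by simp
    fix n :: nat assume n: "n > 0"
    have "c n \<le> P0" unfolding c_def
      using card_mono[of "{..<P0}" "{p. prime p \<and> p dvd n \<and> p < P0}"] by auto
    then have "K ^ c n \<le> K ^ P0" using K1 by (intro power_increasing) auto
    then have "K ^ c n * real n powr \<delta> \<le> K ^ P0 * real n powr \<delta>" by (intro mult_right_mono) auto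
    then show "real (dcount n) \<le> K ^ P0 * real n powr \<delta>" using main[OF n] by linarith
  qed
qed

definition roots :: "nat \<Rightarrow> int \<Rightarrow> nat set" where
  "roots q a = {u. u < q \<and> int (u^2 mod q) = a}"

lemma roots_card:
  assumes "prime q" shows "card (roots q a) \<le> 2"
proof (cases "roots q a = {}")
  case True then show ?thesis by simp
next
  case False
  then obtain w where w: "w \<in> roots q a" by blast
  have "roots q a \<subseteq> {w, (q - w) mod q}"
  proof
    fix u assume u: "u \<in> roots q a"
    have uq: "u < q" and wq: "w < q" using u w unfolding roots_def by auto
    have "u^2 mod q = w^2 mod q" using u w unfolding roots_def by auto
    then have "[int u ^ 2 = int w ^ 2] (mod int q)"
      by (metis cong_int_iff cong_def of_nat_power)
    then have "int q dvd (int u - int w) * (int u + int w)"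
      by (simp add: cong_iff_dvd_diff power2_eq_square algebra_simps)
    then have "int q dvd (int u - int w) \<or> int q dvd (int u + int w)"
      using assms by (simp add: prime_dvd_mult_iff)
    then show "u \<in> {w, (q - w) mod q}"
    proof
      assume "int q dvd (int u - int w)"
      then have "[int u = int w] (mod int q)" by (simp add: cong_iff_dvd_diff)
      then have "[u = w] (mod q)" by (simp add: cong_int_iff)
      then have "u = w" using uq wq by (rule cong_less_modulus_unique_nat)
      then show ?thesis by simp
    next
      assume h: "int q dvd (int u + int w)"
      show ?thesis
      proof (cases "w = 0")
        case True
        then have "int q dvd int u" using h by simp
        then have "q dvd u" by simp
        then have "u = 0" using uq by (cases "u = 0") (auto dest: dvd_imp_le)
        then show ?thesis using True by simp
      next
        case False
        have "int u + int w < 2 * int q" using uq wq by simp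
        moreover have "int u + int w > 0" using False by simp
        moreover obtain k where k: "int u + int w = int q * k" using h by (auto elim: dvdE)
        have "k \<ge> 1"
        proof (rule ccontr)
          assume "\<not> k \<ge> 1" then have "k \<le> 0" by simp
          then have "int q * k \<le> 0" by (simp add: mult_nonneg_nonpos)
          then show False using k \<open>int u + int w > 0\<close> by simp
        qed
        moreover have "k \<le> 1"
        proof (rule ccontr)
          assume "\<not> k \<le> 1" then have "k \<ge> 2" by simp
          then have "int q * k \<ge> int q * 2" by (intro mult_left_mono) auto
          then show False using k \<open>int u + int w < 2 * int q\<close> by linarith
        qed
        ultimately have "int u + int w = int q" using k by simp
        then have "u = q - w" by linarith
        then show ?thesis using False wq by simp
      qed
    qed
  qed
  then have "card (roots q a) \<le> card {w, (q - w) mod q}" by (intro card_mono) auto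
  also have "\<dots> \<le> 2" by (cases "w = (q - w) mod q") auto
  finally show ?thesis .
qed

definition Sset :: "nat \<Rightarrow> nat \<Rightarrow> (int \<times> int \<times> int \<times> int) set" where
  "Sset q N = {(a,b,c,d). int N \<le> a \<and> a < 2*int N \<and> int N \<le> b \<and> b < 2*int N \<and>
      int N \<le> c \<and> c < 2*int N \<and> int N \<le> d \<and> d < 2*int N \<and> int q dvd Fp a b c d}"

lemma Sset_sub: "Sset q N \<subseteq> {int N..<2*int N} \<times> {int N..<2*int N} \<times> {int N..<2*int N} \<times> {int N..<2*int N}"
  unfolding Sset_def by auto

lemma finite_Sset: "finite (Sset q N)"
  by (rule finite_subset[OF Sset_sub]) auto

lemma finite_roots: "finite (roots q a)"
  unfolding roots_def by auto

lemma Eq_le: assumes "prime q" shows "Eq q N \<le> 8 * card (Sset q N)"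
proof -
  define A where "A = {(u, v, x, y). u < q \<and> v < q \<and> x < q \<and> y < q \<and>
      sim (u^2 mod q) N \<and> sim (v^2 mod q) N \<and> sim (x^2 mod q) N \<and> sim (y^2 mod q) N \<and>
      (u + v) mod q = (x + y) mod q}"
  define \<psi> where "\<psi> = (\<lambda>(u::nat, v::nat, x::nat, y::nat).
      ((int (u^2 mod q), int (v^2 mod q), int (x^2 mod q), int (y^2 mod q)), u, v, x))"
  define B where "B = Sigma (Sset q N) (\<lambda>(a,b,c,d). roots q a \<times> roots q b \<times> roots q c)"
  have inj: "inj_on \<psi> A"
  proof (rule inj_onI)
    fix s t assume s: "s \<in> A" and t: "t \<in> A" and e: "\<psi> s = \<psi> t"
    obtain u v x y where s': "s = (u,v,x,y)" by (cases s) auto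
    obtain u' v' x' y' where t': "t = (u',v',x',y')" by (cases t) auto
    have eq: "u = u'" "v = v'" "x = x'" using e unfolding s' t' \<psi>_def by auto
    have "(x + y) mod q = (x + y') mod q" using s t eq unfolding s' t' A_def by auto
    then have "[x + y = x + y'] (mod q)" by (simp add: cong_def)
    then have "[y = y'] (mod q)" by (simp add: cong_add_lcancel_nat)
    then have "y = y'" using s t unfolding s' t' A_def by (auto intro: cong_less_modulus_unique_nat)
    then show "s = t" using eq s' t' by simp
  qed
  have sub: "\<psi> ` A \<subseteq> B"
  proof
    fix z assume "z \<in> \<psi> ` A"
    then obtain u v x y where z: "z = \<psi> (u,v,x,y)" and m: "(u,v,x,y) \<in> A" by auto
    have "int q dvd Fp (int (u^2 mod q)) (int (v^2 mod q)) (int (x^2 mod q)) (int (y^2 mod q))"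
      using m unfolding A_def by (intro Fp_dvd) auto
    then show "z \<in> B" using m unfolding z \<psi>_def B_def A_def Sset_def roots_def sim_def by auto
  qed
  have finB: "finite B" unfolding B_def using finite_Sset finite_roots by auto
  have "Eq q N = card A" unfolding Eq_def A_def by simp
  also have "\<dots> = card (\<psi> ` A)" using inj by (simp add: card_image)
  also have "\<dots> \<le> card B" using sub finB by (rule card_mono[rotated])
  also have "card B = (\<Sum>t\<in>Sset q N. card ((\<lambda>(a,b,c,d). roots q a \<times> roots q b \<times> roots q c) t))"
    unfolding B_def using finite_Sset finite_roots by (subst card_SigmaI) auto
  also have "\<dots> \<le> (\<Sum>t\<in>Sset q N. 8)"
  proof (rule sum_mono)
    fix t :: "int \<times> int \<times> int \<times> int"
    obtain a b c d where t: "t = (a,b,c,d)" by (cases t) auto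
    have "card (roots q a) * card (roots q b) * card (roots q c) \<le> 2 * 2 * 2"
      using roots_card[OF assms] by (intro mult_le_mono) auto
    then show "card ((\<lambda>(a,b,c,d). roots q a \<times> roots q b \<times> roots q c) t) \<le> 8"
      unfolding t by (simp add: card_cartesian_product)
  qed
  also have "\<dots> = 8 * card (Sset q N)" by simp
  finally show ?thesis .
qed

definition Tf :: "int \<times> int \<times> int \<times> int \<Rightarrow> int" where
  "Tf t = (case t of (a,b,c,d) \<Rightarrow> (c-d)^2 - (a-b)^2)"

lemma small_dvd_zero: "\<bar>z\<bar> < int q \<Longrightarrow> int q dvd z \<Longrightarrow> z = (0::int)"
  using dvd_imp_le_int[of z "int q"] by (cases "z = 0") auto

lemma prime_int_q: "prime q \<Longrightarrow> prime (int q)" by simp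

lemma S0_card:
  assumes q: "prime q" "q \<ge> 5" and N: "N^2 \<le> q"
  shows "card {t \<in> Sset q N. Tf t = 0} \<le> 3 * N^2"
proof -
  define n where "n = int N"
  have n2q: "2 * n \<le> int q"
  proof (cases "N \<ge> 2")
    case True
    then have "2 * N \<le> N * N" by simp
    also have "\<dots> \<le> q" using N by (simp add: power2_eq_square)
    finally show ?thesis unfolding n_def by linarith
  next
    case False then show ?thesis using q unfolding n_def by linarith
  qed
  have pq: "prime (int q)" using q by simp
  define B2 where "B2 = {n..<2*n} \<times> {n..<2*n}"
  define f1 where "f1 = (\<lambda>(a::int,c::int). (a,a,c,c))"
  define f2 where "f2 = (\<lambda>(a::int,b::int). (a,b,a,b))"
  define f3 where "f3 = (\<lambda>(a::int,b::int). (a,b,b,a))"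
  have cB2: "card B2 = N^2" unfolding B2_def n_def by (simp add: card_cartesian_product power2_eq_square)
  have sub: "{t \<in> Sset q N. Tf t = 0} \<subseteq> f1 ` B2 \<union> f2 ` B2 \<union> f3 ` B2"
  proof
    fix t assume t: "t \<in> {t \<in> Sset q N. Tf t = 0}"
    obtain a b c d where tt: "t = (a,b,c,d)" by (cases t) auto
    have box: "n \<le> a" "a < 2*n" "n \<le> b" "b < 2*n" "n \<le> c" "c < 2*n" "n \<le> d" "d < 2*n"
      and dv: "int q dvd Fp a b c d" using t unfolding tt Sset_def n_def by auto
    have T0: "(c-d)^2 = (a-b)^2" using t unfolding tt Tf_def by simp
    have "Fp a b c d = 4 * ((c+d-a-b)^2 * (a-b)^2)" unfolding Fp_def using T0 by simp
    then have "int q dvd 4 * ((c+d-a-b)^2 * (a-b)^2)" using dv by simp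
    then have "int q dvd 4 \<or> int q dvd (c+d-a-b)^2 \<or> int q dvd (a-b)^2"
      using pq by (simp add: prime_dvd_mult_iff)
    moreover have "\<not> int q dvd 4" using q by (auto dest: zdvd_imp_le)
    ultimately have "int q dvd (c+d-a-b) \<or> int q dvd (a-b)"
      using pq prime_dvd_power by blast
    moreover have "\<bar>c+d-a-b\<bar> < int q" using box n2q by linarith
    moreover have "\<bar>a-b\<bar> < int q" using box n2q by linarith
    ultimately have "c+d-a-b = 0 \<or> a - b = 0" using small_dvd_zero by blast
    then show "t \<in> f1 ` B2 \<union> f2 ` B2 \<union> f3 ` B2"
    proof
      assume D: "c+d-a-b = 0"
      have "c - d = a - b \<or> c - d = -(a-b)" using T0 by (simp add: power2_eq_iff)
      then have "(c = a \<and> d = b) \<or> (c = b \<and> d = a)" using D by linarith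
      then show ?thesis unfolding tt f2_def f3_def B2_def using box by (auto simp: image_iff)
    next
      assume ab: "a - b = 0"
      then have "(c-d)^2 = 0" using T0 by simp
      then have "c = d" by simp
      then show ?thesis unfolding tt f1_def B2_def using box ab by (auto simp: image_iff)
    qed
  qed
  have "card {t \<in> Sset q N. Tf t = 0} \<le> card (f1 ` B2 \<union> f2 ` B2 \<union> f3 ` B2)"
    using sub by (intro card_mono) (auto simp: B2_def)
  also have "\<dots> \<le> card (f1 ` B2) + card (f2 ` B2) + card (f3 ` B2)"
    by (meson card_Un_le add_right_mono le_trans)
  also have "\<dots> \<le> card B2 + card B2 + card B2" by (intro add_mono card_image_le) (auto simp: B2_def)
  finally show ?thesis using cB2 by simp
qed

lemma Fp_alt: "(c-d)^2 - (a-b)^2 = T \<Longrightarrow> T^2 - Fp a b c d = (c+d-a-b) * (4*(a+b)*T - 4*(c+d-a-b)*(a-b)^2)"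
  unfolding Fp_def by (simp add: algebra_simps power2_eq_square)

lemma Fp_bound:
  fixes n a b c d :: int
  assumes box: "n \<le> a" "a < 2*n" "n \<le> b" "b < 2*n" "n \<le> c" "c < 2*n" "n \<le> d" "d < 2*n"
  shows "\<bar>Fp a b c d\<bar> \<le> 50 * n^4"
proof -
  define T where "T = (c-d)^2 - (a-b)^2"
  define D where "D = c+d-a-b"
  define m where "m = a+b"
  define P where "P = (a-b)^2"
  have n0: "n \<ge> 0" using box by linarith
  have "\<bar>a-b\<bar> \<le> n" "\<bar>c-d\<bar> \<le> n" using box by linarith+
  then have P1: "(a-b)^2 \<le> n^2" "(c-d)^2 \<le> n^2"
    by (metis abs_le_square_iff abs_of_nonneg n0)+
  have P0: "(a-b)^2 \<ge> 0" "(c-d)^2 \<ge> 0" by simp_all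
  have T1: "\<bar>T\<bar> \<le> n^2" unfolding T_def using P1 P0 by linarith
  have D1: "\<bar>D\<bar> \<le> 2*n" unfolding D_def using box by linarith
  have m1: "\<bar>m\<bar> \<le> 4*n" unfolding m_def using box by linarith
  have "Fp a b c d = T^2 - 4*D*m*T + 4*D^2*P" unfolding Fp_def T_def D_def m_def P_def by simp
  moreover have "\<bar>x - y + z\<bar> \<le> \<bar>x\<bar> + \<bar>y\<bar> + \<bar>z\<bar>" for x y z :: int by arith
  moreover have "\<bar>T^2\<bar> = \<bar>T\<bar>^2" by (simp add: power_abs)
  moreover have "\<bar>4*D*m*T\<bar> = 4*(\<bar>D\<bar>*\<bar>m\<bar>*\<bar>T\<bar>)" by (simp add: abs_mult)
  moreover have "\<bar>4*D^2*P\<bar> = 4*(\<bar>D\<bar>^2*P)" unfolding P_def by (simp add: abs_mult power_abs)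
  ultimately have "\<bar>Fp a b c d\<bar> \<le> \<bar>T\<bar>^2 + 4*(\<bar>D\<bar>*\<bar>m\<bar>*\<bar>T\<bar>) + 4*(\<bar>D\<bar>^2*P)"
    by metis
  also have "\<dots> \<le> (n^2)^2 + 4*((2*n)*(4*n)*(n^2)) + 4*((2*n)^2*n^2)"
  proof -
    have "\<bar>T\<bar>^2 \<le> (n^2)^2" using T1 by (intro power_mono) auto
    moreover have "\<bar>D\<bar>*\<bar>m\<bar>*\<bar>T\<bar> \<le> (2*n)*(4*n)*(n^2)" using T1 D1 m1 n0
      by (intro mult_mono) auto
    moreover have "\<bar>D\<bar>^2*P \<le> (2*n)^2*n^2"
    proof -
      have "\<bar>D\<bar>^2 \<le> (2*n)^2" using D1 by (intro power_mono) auto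
      then show ?thesis unfolding P_def using P1(1) n0 by (intro mult_mono) auto
    qed
    ultimately show ?thesis by linarith
  qed
  also have "\<dots> = 49 * n^4" by (simp add: algebra_simps power2_eq_square power4_eq_xxxx)
  finally show ?thesis using n0 by simp
qed

definition Spr :: "nat \<Rightarrow> nat \<Rightarrow> int \<Rightarrow> int \<Rightarrow> (int \<times> int \<times> int \<times> int) set" where
  "Spr q N p r = {t \<in> Sset q N. case t of (a,b,c,d) \<Rightarrow> a - b = p \<and> c - d = r}"

lemma Spr_card:
  assumes q: "prime q" "q \<ge> 5" and N: "N^2 \<le> q"
    and T: "r^2 - p^2 \<noteq> 0" and pr: "\<bar>p\<bar> < int N" "\<bar>r\<bar> < int N"
  shows "card (Spr q N p r) \<le> card (Sigma {-(50 * int N^4 div int q)..50 * int N^4 div int q}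
           (\<lambda>k. {D. D \<noteq> 0 \<and> D dvd ((r^2 - p^2)^2 - k * int q)}))"
proof -
  define n where "n = int N"
  define T where "T = r^2 - p^2"
  define K where "K = 50 * n^4 div int q"
  define \<phi> where "\<phi> = (\<lambda>(a::int,b::int,c::int,d::int). (Fp a b c d div int q, c+d-a-b))"
  have qpos: "int q > 0" using q by simp
  have Tq: "\<bar>T\<bar> < int q"
  proof -
    have "\<bar>p\<bar>^2 < n^2" by (rule power_strict_mono) (use pr in \<open>auto simp: n_def\<close>)
    moreover have "\<bar>r\<bar>^2 < n^2" by (rule power_strict_mono) (use pr in \<open>auto simp: n_def\<close>)
    ultimately have "p^2 < n^2" "r^2 < n^2" by (simp_all add: power2_abs)
    moreover have "p^2 \<ge> 0" "r^2 \<ge> 0" by simp_all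
    moreover have "n^2 \<le> int q" using N unfolding n_def by (metis of_nat_le_iff of_nat_power)
    ultimately show ?thesis unfolding T_def by linarith
  qed
  have pq: "prime (int q)" using q by simp
  have nT2: "\<not> int q dvd T^2"
  proof
    assume "int q dvd T^2"
    then have "int q dvd T" using pq prime_dvd_power by blast
    then have "T = 0" using Tq small_dvd_zero by blast
    then show False using T unfolding T_def by simp
  qed
  have inj: "inj_on \<phi> (Spr q N p r)"
  proof (rule inj_onI)
    fix s t assume s: "s \<in> Spr q N p r" and t: "t \<in> Spr q N p r" and e: "\<phi> s = \<phi> t"
    obtain a b c d where s': "s = (a,b,c,d)" by (cases s) auto
    obtain a' b' c' d' where t': "t = (a',b',c',d')" by (cases t) auto
    have hs: "a - b = p" "c - d = r" "int q dvd Fp a b c d" using s unfolding s' Spr_def Sset_def by auto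
    have ht: "a' - b' = p" "c' - d' = r" "int q dvd Fp a' b' c' d'" using t unfolding t' Spr_def Sset_def by auto
    have e1: "Fp a b c d div int q = Fp a' b' c' d' div int q" and e2: "c+d-a-b = c'+d'-a'-b'"
      using e unfolding s' t' \<phi>_def by auto
    have eqF: "Fp a b c d = Fp a' b' c' d'"
      using e1 hs(3) ht(3) by (metis dvd_div_mult_self)
    have A1: "T^2 - Fp a b c d = (c+d-a-b) * (4*(a+b)*T - 4*(c+d-a-b)*p^2)"
      using Fp_alt[of c d a b T] hs unfolding T_def by simp
    have A2: "T^2 - Fp a' b' c' d' = (c+d-a-b) * (4*(a'+b')*T - 4*(c+d-a-b)*p^2)"
      using Fp_alt[of c' d' a' b' T] ht e2 unfolding T_def by simp
    have D0: "c+d-a-b \<noteq> 0"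
    proof
      assume "c+d-a-b = 0"
      then have "T^2 - Fp a b c d = 0" using A1 by simp
      then show False using hs(3) nT2 by simp
    qed
    have "(c+d-a-b) * (4*(a+b)*T - 4*(c+d-a-b)*p^2) = T^2 - Fp a b c d" using A1 by simp
    also have "\<dots> = T^2 - Fp a' b' c' d'" using eqF by simp
    also have "\<dots> = (c+d-a-b) * (4*(a'+b')*T - 4*(c+d-a-b)*p^2)" using A2 by simp
    finally have eqm: "(c+d-a-b) * (4*(a+b)*T - 4*(c+d-a-b)*p^2) = (c+d-a-b) * (4*(a'+b')*T - 4*(c+d-a-b)*p^2)" .
    have "4*(a+b)*T - 4*(c+d-a-b)*p^2 = 4*(a'+b')*T - 4*(c+d-a-b)*p^2"
      using mult_left_cancel[OF D0] eqm by blast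
    then have "(a+b)*T = (a'+b')*T" by linarith
    then have "a + b = a' + b'" using T unfolding T_def by simp
    then show "s = t" unfolding s' t' using hs ht e2 by simp
  qed
  have sub: "\<phi> ` Spr q N p r \<subseteq> Sigma {-K..K} (\<lambda>k. {D. D \<noteq> 0 \<and> D dvd (T^2 - k * int q)})"
  proof
    fix z assume "z \<in> \<phi> ` Spr q N p r"
    then obtain a b c d where z: "z = \<phi> (a,b,c,d)" and m: "(a,b,c,d) \<in> Spr q N p r" by auto
    have hs: "a - b = p" "c - d = r" "int q dvd Fp a b c d" using m unfolding Spr_def Sset_def by auto
    have box: "n \<le> a" "a < 2*n" "n \<le> b" "b < 2*n" "n \<le> c" "c < 2*n" "n \<le> d" "d < 2*n"
      using m unfolding Spr_def Sset_def n_def by auto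
    define k where "k = Fp a b c d div int q"
    have Fk: "Fp a b c d = k * int q" unfolding k_def using hs(3) by simp
    have "\<bar>Fp a b c d\<bar> \<le> 50 * n^4" by (rule Fp_bound[OF box])
    then have "int q * \<bar>k\<bar> \<le> 50 * n^4" using Fk qpos by (simp add: abs_mult mult.commute)
    then have "(int q * \<bar>k\<bar>) div int q \<le> 50 * n^4 div int q" by (rule zdiv_mono1) (use qpos in simp)
    then have kK: "\<bar>k\<bar> \<le> K" unfolding K_def using qpos by simp
    have alt: "T^2 - Fp a b c d = (c+d-a-b) * (4*(a+b)*T - 4*(c+d-a-b)*(a-b)^2)"
      using Fp_alt[of c d a b T] hs unfolding T_def by simp
    have D0: "c+d-a-b \<noteq> 0"
    proof
      assume "c+d-a-b = 0"
      then have "T^2 - Fp a b c d = 0" using alt by simp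
      then show False using hs(3) nT2 by simp
    qed
    have "c+d-a-b dvd T^2 - k * int q" using alt Fk by simp
    then show "z \<in> Sigma {-K..K} (\<lambda>k. {D. D \<noteq> 0 \<and> D dvd (T^2 - k * int q)})"
    proof -
      have "z = (k, c+d-a-b)" unfolding z \<phi>_def k_def by simp
      then show ?thesis using kK D0 \<open>c+d-a-b dvd T^2 - k * int q\<close> by auto
    qed
  qed
  have fin: "finite (Sigma {-K..K} (\<lambda>k. {D. D \<noteq> 0 \<and> D dvd (T^2 - k * int q)}))"
  proof (rule finite_SigmaI)
    fix k assume "k \<in> {-K..K}"
    have "T^2 - k * int q \<noteq> 0"
    proof
      assume "T^2 - k * int q = 0"
      then have "int q dvd T^2" by (metis dvd_triv_right eq_iff_diff_eq_0)
      then show False using nT2 by simp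
    qed
    then show "finite {D. D \<noteq> 0 \<and> D dvd (T^2 - k * int q)}"
      by (rule finite_subset[rotated, OF finite_divisors_int]) auto
  qed simp
  have "card (Spr q N p r) = card (\<phi> ` Spr q N p r)" using inj by (simp add: card_image)
  also have "\<dots> \<le> card (Sigma {-K..K} (\<lambda>k. {D. D \<noteq> 0 \<and> D dvd (T^2 - k * int q)}))"
    using sub fin by (rule card_mono[rotated])
  finally show ?thesis unfolding K_def T_def n_def .
qed

lemma int_divs_card:
  assumes "M \<noteq> (0::int)"
  shows "card {D::int. D \<noteq> 0 \<and> D dvd M} \<le> 2 * dcount (nat \<bar>M\<bar>)"
proof -
  define A where "A = {d. d dvd nat \<bar>M\<bar>}"
  have finA: "finite A" unfolding A_def by (rule finite_divisors_nat) (use assms in simp)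
  have "{D::int. D \<noteq> 0 \<and> D dvd M} \<subseteq> int ` A \<union> (\<lambda>x. - int x) ` A"
  proof
    fix D assume D: "D \<in> {D::int. D \<noteq> 0 \<and> D dvd M}"
    show "D \<in> int ` A \<union> (\<lambda>x. - int x) ` A"
    proof (cases "D > 0")
      case True
      then have "int (nat D) dvd M" using D by simp
      then have "nat D dvd nat \<bar>M\<bar>" by simp
      then have "nat D \<in> A" unfolding A_def by simp
      moreover have "D = int (nat D)" using True by simp
      ultimately have "D \<in> int ` A" by (rule rev_image_eqI)
      then show ?thesis by blast
    next
      case False
      then have "int (nat (-D)) dvd M" using D by simp
      then have "nat (-D) dvd nat \<bar>M\<bar>" by simp
      then have "nat (-D) \<in> A" unfolding A_def by simp
      moreover have "D = - int (nat (-D))" using False by simp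
      ultimately have "D \<in> (\<lambda>x. - int x) ` A" by (rule rev_image_eqI)
      then show ?thesis by blast
    qed
  qed
  then have "card {D::int. D \<noteq> 0 \<and> D dvd M} \<le> card (int ` A \<union> (\<lambda>x. - int x) ` A)"
    using finA by (intro card_mono) auto
  also have "\<dots> \<le> card (int ` A) + card ((\<lambda>x. - int x) ` A)" by (rule card_Un_le)
  also have "\<dots> \<le> card A + card A" by (intro add_mono card_image_le finA)
  finally show ?thesis unfolding A_def dcount_def by simp
qed

lemma Sigma_bound:
  fixes W Q K Y :: int
  assumes dB: "\<forall>n>0. real (dcount n) \<le> C * real n powr \<delta>" and C: "C \<ge> 0" and K: "K \<ge> 0" and d: "\<delta> \<ge> 0"
    and nz: "\<And>k. k \<in> {-K..K} \<Longrightarrow> W - k*Q \<noteq> 0 \<and> \<bar>W - k*Q\<bar> \<le> Y"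
  shows "real (card (Sigma {-K..K} (\<lambda>k. {D. D \<noteq> 0 \<and> D dvd (W - k*Q)}))) \<le> (2 * real_of_int K + 1) * (2 * (C * real_of_int Y powr \<delta>))"
proof -
  have fin: "\<forall>k\<in>{-K..K}. finite {D. D \<noteq> 0 \<and> D dvd (W - k*Q)}"
  proof
    fix k assume "k \<in> {-K..K}"
    then have "W - k*Q \<noteq> 0" using nz by blast
    then show "finite {D. D \<noteq> 0 \<and> D dvd (W - k*Q)}"
      by (rule finite_subset[rotated, OF finite_divisors_int]) auto
  qed
  have "real (card (Sigma {-K..K} (\<lambda>k. {D. D \<noteq> 0 \<and> D dvd (W - k*Q)})))
      = (\<Sum>k\<in>{-K..K}. real (card {D. D \<noteq> 0 \<and> D dvd (W - k*Q)}))"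
    using fin by (subst card_SigmaI) auto
  also have "\<dots> \<le> (\<Sum>k\<in>{-K..K}. 2 * (C * real_of_int Y powr \<delta>))"
  proof (rule sum_mono)
    fix k assume k: "k \<in> {-K..K}"
    have nz0: "W - k*Q \<noteq> 0" and Yb: "\<bar>W - k*Q\<bar> \<le> Y" using nz[OF k] by auto
    have "real (card {D. D \<noteq> 0 \<and> D dvd (W - k*Q)}) \<le> real (2 * dcount (nat \<bar>W - k*Q\<bar>))"
      using int_divs_card[OF nz0] by (simp only: of_nat_le_iff)
    also have "\<dots> = 2 * real (dcount (nat \<bar>W - k*Q\<bar>))" by simp
    also have "\<dots> \<le> 2 * (C * real (nat \<bar>W - k*Q\<bar>) powr \<delta>)"
    proof -
      have "nat \<bar>W - k*Q\<bar> > 0" using nz0 by simp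
      then have "real (dcount (nat \<bar>W - k*Q\<bar>)) \<le> C * real (nat \<bar>W - k*Q\<bar>) powr \<delta>" using dB by blast
      then show ?thesis by linarith
    qed
    also have "\<dots> \<le> 2 * (C * real_of_int Y powr \<delta>)"
    proof -
      have "real (nat \<bar>W - k*Q\<bar>) = real_of_int \<bar>W - k*Q\<bar>" by simp
      also have "\<dots> \<le> real_of_int Y" using Yb by linarith
      finally have "real (nat \<bar>W - k*Q\<bar>) powr \<delta> \<le> real_of_int Y powr \<delta>"
        by (rule powr_mono2[rotated 2]) (auto simp: assms)
      then show ?thesis using C by (intro mult_left_mono) auto
    qed
    finally show "real (card {D. D \<noteq> 0 \<and> D dvd (W - k*Q)}) \<le> 2 * (C * real_of_int Y powr \<delta>)" .
  qed
  also have "\<dots> = (2 * real_of_int K + 1) * (2 * (C * real_of_int Y powr \<delta>))"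
    using K by simp
  finally show ?thesis .
qed

lemma T_facts:
  assumes q: "prime q" and N: "N^2 \<le> q" and pr: "\<bar>p\<bar> < int N" "\<bar>r\<bar> < int N"
    and T: "r^2 - p^2 \<noteq> 0"
  shows "(r^2 - p^2)^2 \<le> int N^4" "\<not> int q dvd (r^2 - p^2)^2"
proof -
  define n where "n = int N"
  define T where "T = r^2 - p^2"
  have "\<bar>p\<bar>^2 < n^2" by (rule power_strict_mono) (use pr in \<open>auto simp: n_def\<close>)
  moreover have "\<bar>r\<bar>^2 < n^2" by (rule power_strict_mono) (use pr in \<open>auto simp: n_def\<close>)
  ultimately have "p^2 < n^2" "r^2 < n^2" by (simp_all add: power2_abs)
  moreover have "p^2 \<ge> 0" "r^2 \<ge> 0" by simp_all
  moreover have "n^2 \<le> int q" using N unfolding n_def by (metis of_nat_le_iff of_nat_power)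
  ultimately have Tn: "\<bar>T\<bar> \<le> n^2" and Tq: "\<bar>T\<bar> < int q" unfolding T_def by linarith+
  have "\<bar>T\<bar>^2 \<le> (n^2)^2" using Tn by (intro power_mono) auto
  then show "(r^2 - p^2)^2 \<le> int N^4" unfolding T_def n_def by (simp add: power2_abs power_mult[symmetric])
  have pq: "prime (int q)" using q by simp
  show "\<not> int q dvd (r^2 - p^2)^2"
  proof
    assume "int q dvd (r^2 - p^2)^2"
    then have "int q dvd T" unfolding T_def using pq prime_dvd_power by blast
    then have "T = 0" using Tq small_dvd_zero by blast
    then show False using T unfolding T_def by simp
  qed
qed

lemma Sset_bound:
  assumes q: "prime q" "q \<ge> 5" and N: "N^2 \<le> q"
    and dB: "\<forall>n>0. real (dcount n) \<le> C * real n powr \<delta>" and C: "C \<ge> 0" and d: "\<delta> \<ge> 0"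
  shows "real (card (Sset q N)) \<le> 3 * real N^2 + 4 * real N^2 * ((100 * real N^4 / real q + 1) * (2 * (C * (51 * real N^4) powr \<delta>)))"
proof -
  define n where "n = int N"
  define K where "K = 50 * n^4 div int q"
  define Bd where "Bd = (2 * real_of_int K + 1) * (2 * (C * real_of_int (51 * n^4) powr \<delta>))"
  have qpos: "int q > 0" using q by simp
  have K0: "K \<ge> 0" unfolding K_def using qpos by (intro div_int_pos_iff[THEN iffD2]) (auto simp: n_def)
  have Kq: "K * int q \<le> 50 * n^4" unfolding K_def
    using pos_mod_sign[OF qpos, of "50*n^4"] div_mult_mod_eq[of "50*n^4" "int q"] by linarith
  define S0 where "S0 = {t \<in> Sset q N. Tf t = 0}"
  define S1 where "S1 = {t \<in> Sset q N. Tf t \<noteq> 0}"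
  define I where "I = {pr \<in> {-(n-1)..n-1} \<times> {-(n-1)..n-1}. (snd pr)^2 - (fst pr)^2 \<noteq> 0}"
  have finI: "finite I" unfolding I_def by simp
  have split: "Sset q N = S0 \<union> S1" unfolding S0_def S1_def by auto
  have "S1 \<subseteq> (\<Union>pr\<in>I. Spr q N (fst pr) (snd pr))"
  proof
    fix t assume t: "t \<in> S1"
    obtain a b c d where tt: "t = (a,b,c,d)" by (cases t) auto
    have box: "n \<le> a" "a < 2*n" "n \<le> b" "b < 2*n" "n \<le> c" "c < 2*n" "n \<le> d" "d < 2*n"
      using t unfolding S1_def tt Sset_def n_def by auto
    have "(c-d)^2 - (a-b)^2 \<noteq> 0" using t unfolding S1_def tt Tf_def by simp
    then have "(a-b, c-d) \<in> I" unfolding I_def using box by auto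
    moreover have "t \<in> Spr q N (a-b) (c-d)" using t unfolding S1_def Spr_def tt by auto
    ultimately show "t \<in> (\<Union>pr\<in>I. Spr q N (fst pr) (snd pr))" by force
  qed
  then have "card S1 \<le> card (\<Union>pr\<in>I. Spr q N (fst pr) (snd pr))"
    by (intro card_mono) (auto intro: finite_subset[OF _ finite_Sset] simp: Spr_def finI)
  also have "\<dots> \<le> (\<Sum>pr\<in>I. card (Spr q N (fst pr) (snd pr)))" by (rule card_UN_le[OF finI])
  finally have "real (card S1) \<le> real (\<Sum>pr\<in>I. card (Spr q N (fst pr) (snd pr)))"
    by (simp only: of_nat_le_iff)
  also have "\<dots> = (\<Sum>pr\<in>I. real (card (Spr q N (fst pr) (snd pr))))" by (rule of_nat_sum)
  also have "\<dots> \<le> (\<Sum>pr\<in>I. Bd)"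
  proof (rule sum_mono)
    fix pr assume pr: "pr \<in> I"
    obtain p r where prr: "pr = (p, r)" by (cases pr) auto
    have pr': "\<bar>p\<bar> < int N" "\<bar>r\<bar> < int N" "r^2 - p^2 \<noteq> 0" using pr unfolding I_def prr n_def by auto
    note TF = T_facts[OF q(1) N pr']
    have "real (card (Spr q N p r)) \<le> real (card (Sigma {-K..K} (\<lambda>k. {D. D \<noteq> 0 \<and> D dvd ((r^2 - p^2)^2 - k * int q)})))"
      using Spr_card[OF q N pr'(3) pr'(1,2)] unfolding K_def n_def by (simp only: of_nat_le_iff)
    also have "\<dots> \<le> Bd" unfolding Bd_def
    proof (rule Sigma_bound[OF dB C K0 d])
      fix k assume k: "k \<in> {-K..K}"
      show "(r^2 - p^2)^2 - k * int q \<noteq> 0 \<and> \<bar>(r^2 - p^2)^2 - k * int q\<bar> \<le> 51 * n^4"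
      proof
        show "(r^2 - p^2)^2 - k * int q \<noteq> 0"
        proof
          assume "(r^2 - p^2)^2 - k * int q = 0"
          then have "int q dvd (r^2 - p^2)^2" by (metis dvd_triv_right eq_iff_diff_eq_0)
          then show False using TF(2) by simp
        qed
        have "\<bar>k\<bar> * int q \<le> K * int q" using k qpos by (intro mult_right_mono) auto
        then have "\<bar>k * int q\<bar> \<le> 50 * n^4" using Kq by (simp add: abs_mult)
        moreover have "\<bar>(r^2 - p^2)^2 - k * int q\<bar> \<le> \<bar>(r^2 - p^2)^2\<bar> + \<bar>k * int q\<bar>" by (rule abs_triangle_ineq4)
        moreover have "\<bar>(r^2 - p^2)^2\<bar> \<le> n^4" using TF(1) unfolding n_def by simp
        ultimately show "\<bar>(r^2 - p^2)^2 - k * int q\<bar> \<le> 51 * n^4" by linarith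
      qed
    qed
    finally show "real (card (Spr q N (fst pr) (snd pr))) \<le> Bd" unfolding prr by simp
  qed
  also have "\<dots> = real (card I) * Bd" by simp
  also have "\<dots> \<le> (4 * real N^2) * ((100 * real N^4 / real q + 1) * (2 * (C * (51 * real N^4) powr \<delta>)))"
  proof (rule mult_mono)
    have "card I \<le> card ({-(n-1)..n-1} \<times> {-(n-1)..n-1})" unfolding I_def by (intro card_mono) auto
    also have "\<dots> = nat (2*n-1) * nat (2*n-1)" by (simp add: card_cartesian_product)
    also have "\<dots> \<le> (2*N) * (2*N)" unfolding n_def by (intro mult_le_mono) auto
    finally have "card I \<le> 4 * N^2" by (simp add: power2_eq_square)
    then have "real (card I) \<le> real (4 * N^2)" by (simp only: of_nat_le_iff)
    then show "real (card I) \<le> 4 * real N^2" by simp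
    have rK: "real_of_int K \<le> 50 * real N^4 / real q"
    proof -
      have "real_of_int (K * int q) \<le> real_of_int (50 * n^4)" using Kq by (simp only: of_int_le_iff)
      then have "real_of_int K * real q \<le> 50 * real N^4" unfolding n_def by simp
      then show ?thesis using qpos by (simp add: pos_le_divide_eq)
    qed
    have Y: "real_of_int (51 * n^4) = 51 * real N^4" unfolding n_def by simp
    have "0 \<le> 2 * (C * (51 * real N^4) powr \<delta>)" using C by simp
    then show "Bd \<le> (100 * real N^4 / real q + 1) * (2 * (C * (51 * real N^4) powr \<delta>))"
      unfolding Bd_def Y using rK by (intro mult_right_mono) auto
    show "0 \<le> 4 * real N^2" by simp
    show "0 \<le> Bd" unfolding Bd_def using C K0 by simp
  qed
  finally have c1: "real (card S1) \<le> 4 * real N^2 * ((100 * real N^4 / real q + 1) * (2 * (C * (51 * real N^4) powr \<delta>)))" .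
  have c0: "real (card S0) \<le> 3 * real N^2"
  proof -
    have "real (card S0) \<le> real (3 * N^2)" using S0_card[OF q N] unfolding S0_def by (simp only: of_nat_le_iff)
    then show ?thesis by simp
  qed
  have "card (Sset q N) \<le> card S0 + card S1" unfolding split by (rule card_Un_le)
  then have "real (card (Sset q N)) \<le> real (card S0) + real (card S1)" by (simp only: of_nat_le_iff of_nat_add[symmetric])
  then show ?thesis using c0 c1 by linarith
qed

theorem propositionA1:
  "\<forall>\<epsilon>>0. \<exists>Q. \<forall>q N. prime q \<longrightarrow> real q \<ge> Q \<longrightarrow> 0 < N \<longrightarrow> real N \<le> sqrt (real q) \<longrightarrow>
     real (Eq q N) \<le> real N ^ 6 * real q powr (-1 + \<epsilon>) + real N ^ 2 * real q powr \<epsilon>"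
proof (intro allI impI)
  fix \<epsilon> :: real assume ep: "\<epsilon> > 0"
  define \<delta> where "\<delta> = \<epsilon> / 4"
  have dpos: "\<delta> > 0" unfolding \<delta>_def using ep by simp
  obtain C where C: "C > 0" and dB: "\<forall>n>0. real (dcount n) \<le> C * real n powr \<delta>"
    using divisor_bound[OF dpos] by blast
  define W where "W = C * 51 powr \<delta>"
  have W0: "W \<ge> 0" unfolding W_def using C by simp
  define M where "M = 24 + 6400 * W"
  have M0: "M > 0" unfolding M_def using W0 by simp
  show "\<exists>Q. \<forall>q N. prime q \<longrightarrow> real q \<ge> Q \<longrightarrow> 0 < N \<longrightarrow> real N \<le> sqrt (real q) \<longrightarrow>
     real (Eq q N) \<le> real N ^ 6 * real q powr (-1 + \<epsilon>) + real N ^ 2 * real q powr \<epsilon>"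
  proof (intro exI allI impI)
    fix q N :: nat
    assume q: "prime q" and Qq: "real q \<ge> max 5 (M powr (2/\<epsilon>))" and N0: "0 < N" and Nq: "real N \<le> sqrt (real q)"
    define x where "x = real q"
    define y where "y = real N"
    have q5r: "x \<ge> 5" using Qq unfolding x_def by simp
    then have q5: "q \<ge> 5" unfolding x_def by simp
    have xpos: "x > 0" using q5r by simp
    have y0: "y \<ge> 0" unfolding y_def by simp
    have "y^2 \<le> (sqrt x)^2" using Nq y0 unfolding x_def y_def by (intro power_mono) auto
    then have y2x: "y^2 \<le> x" using xpos by simp
    then have "real (N^2) \<le> real q" unfolding x_def y_def by simp
    then have N2: "N^2 \<le> q" by (simp only: of_nat_le_iff)
    define Z where "Z = x powr (\<epsilon>/2)"
    have Z1: "Z \<ge> 1" unfolding Z_def using q5r ep by (intro ge_one_powr_ge_zero) auto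
    have MZ: "M \<le> Z"
    proof -
      have "M powr (2/\<epsilon>) \<le> x" using Qq unfolding x_def by simp
      then have "(M powr (2/\<epsilon>)) powr (\<epsilon>/2) \<le> x powr (\<epsilon>/2)" using ep by (intro powr_mono2) auto
      also have "(M powr (2/\<epsilon>)) powr (\<epsilon>/2) = M" using ep M0 by (simp add: powr_powr)
      finally show ?thesis unfolding Z_def .
    qed
    have c: "(51 * y^4) powr \<delta> \<le> 51 powr \<delta> * Z"
    proof -
      have e1: "(51 * y^4) powr \<delta> = 51 powr \<delta> * (y^4) powr \<delta>" by (simp add: powr_mult)
      have "(y^2)^2 \<le> x^2" using y2x y0 by (intro power_mono) auto
      then have "y^4 \<le> x^2" by (simp add: power_mult[symmetric])
      then have e2: "(y^4) powr \<delta> \<le> (x^2) powr \<delta>" using dpos y0 by (intro powr_mono2) auto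
      have "x^2 = x powr 2" using xpos by (simp add: powr_numeral)
      then have "(x^2) powr \<delta> = x powr (2 * \<delta>)" by (simp add: powr_powr)
      also have "\<dots> = Z" unfolding Z_def \<delta>_def by simp
      finally have "(y^4) powr \<delta> \<le> Z" using e2 by simp
      then show ?thesis unfolding e1 by (intro mult_left_mono) auto
    qed
    have E8: "real (Eq q N) \<le> 8 * real (card (Sset q N))"
    proof -
      have "real (Eq q N) \<le> real (8 * card (Sset q N))" using Eq_le[OF q] by (simp only: of_nat_le_iff)
      then show ?thesis by simp
    qed
    have SB: "real (card (Sset q N)) \<le> 3 * y^2 + 4 * y^2 * ((100 * y^4 / x + 1) * (2 * (C * (51 * y^4) powr \<delta>)))"
      using Sset_bound[OF q q5 N2 dB] C dpos unfolding x_def y_def by simp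
    define V where "V = y^6 / x"
    have V0: "V \<ge> 0" unfolding V_def using xpos y0 by simp
    define G where "G = V + y^2"
    have "4 * y^2 * ((100 * y^4 / x + 1) * (2 * (C * (51 * y^4) powr \<delta>)))
        \<le> 4 * y^2 * ((100 * y^4 / x + 1) * (2 * (C * (51 powr \<delta> * Z))))"
      using c C xpos y0 by (intro mult_left_mono) auto
    also have "\<dots> = 8 * W * Z * (100 * V + y^2)"
      unfolding W_def V_def using xpos by (simp add: field_simps power_add[symmetric])
    finally have SB2: "real (card (Sset q N)) \<le> 3 * y^2 + 8 * W * Z * (100 * V + y^2)" using SB by linarith
    have "real (Eq q N) \<le> 24 * y^2 + 64 * W * Z * (100 * V + y^2)" using E8 SB2 by linarith
    also have "\<dots> \<le> 24 * Z * G + 6400 * W * Z * G"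
    proof -
      have "24 * y^2 \<le> 24 * G" unfolding G_def using V0 by simp
      also have "\<dots> \<le> 24 * Z * G"
      proof -
        have G0: "G \<ge> 0" unfolding G_def using V0 by simp
        have "24 * G * 1 \<le> 24 * G * Z" by (rule mult_left_mono[OF Z1]) (use G0 in simp)
        then show ?thesis by (simp add: ac_simps)
      qed
      finally have h1: "24 * y^2 \<le> 24 * Z * G" .
      have h2: "64 * W * Z * (100 * V + y^2) \<le> 64 * W * Z * (100 * G)"
        unfolding G_def using W0 Z1 y0 by (intro mult_left_mono) auto
      have h3: "64 * W * Z * (100 * G) = 6400 * W * Z * G" by (simp add: algebra_simps)
      show ?thesis using h1 h2 h3 by linarith
    qed
    also have "\<dots> = M * Z * G" unfolding M_def by (simp add: algebra_simps)
    also have "\<dots> \<le> Z * Z * G" using MZ Z1 V0 unfolding G_def by (intro mult_right_mono) auto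
    also have "Z * Z = x powr \<epsilon>" unfolding Z_def by (simp add: powr_add[symmetric])
    also have "x powr \<epsilon> * G = y^6 * x powr (-1 + \<epsilon>) + y^2 * x powr \<epsilon>"
    proof -
      have "x powr (-1 + \<epsilon>) = x powr (-1) * x powr \<epsilon>" by (rule powr_add)
      also have "x powr (-1) = 1 / x" using xpos by (simp add: powr_minus_divide)
      finally have px: "x powr (-1 + \<epsilon>) = x powr \<epsilon> / x" by simp
      show ?thesis unfolding G_def V_def px by (simp add: algebra_simps)
    qed
    finally show "real (Eq q N) \<le> real N ^ 6 * real q powr (-1 + \<epsilon>) + real N ^ 2 * real q powr \<epsilon>"
      unfolding x_def y_def .
  qed
qed

end
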